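(* Let $\mathcal{X}$ be the graph obtained from the icosahedron graph (the 1-skeleton of the regular icosahedron; 12 vertices, 5-regular, planar) by deleting one edge $\{a,b\}$. Then the maximum size of an independent set of $\mathcal{X}$ is $4$, and both $a$ and $b$ belong to every maximum independent set of $\mathcal{X}$.
   Context: An independent set is a set of pairwise non-adjacent vertices; a maximum independent set is one of largest possible size. *)

theory Defs
  imports Main
begin

text \<open>The icosahedron graph is modelled concretely on the
vertices 0..11: vertex 0 (top), upper pentagon 1..5, lower pentagon 6..10,
vertex 11 (bottom).\<close>

definition ico_edges :: "nat set set" where
  "ico_edges = (\<Union>i\<in>{1..5::nat}.
     {{0, i}, {i, i mod 5 + 1}, {5 + i, 5 + (i mod 5 + 1)}, {11, 5 + i},
      {i, 5 + i}, {i, 5 + (i mod 5 + 1)}})"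

definition ico_vertices :: "nat set" where
  "ico_vertices = {0..11}"

definition ico_minus_adj :: "nat \<Rightarrow> nat \<Rightarrow> nat \<Rightarrow> nat \<Rightarrow> bool" where
  "ico_minus_adj a b u v \<longleftrightarrow> {u, v} \<in> ico_edges \<and> {u, v} \<noteq> {a, b}"

definition independent_set :: "'a set \<Rightarrow> ('a \<Rightarrow> 'a \<Rightarrow> bool) \<Rightarrow> 'a set \<Rightarrow> bool" where
  "independent_set V adj S \<longleftrightarrow> S \<subseteq> V \<and> (\<forall>u\<in>S. \<forall>v\<in>S. \<not> adj u v)"

definition independence_number :: "'a set \<Rightarrow> ('a \<Rightarrow> 'a \<Rightarrow> bool) \<Rightarrow> nat" where
  "independence_number V adj = Max (card ` {S. independent_set V adj S})"

definition maximum_independent_set :: "'a set \<Rightarrow> ('a \<Rightarrow> 'a \<Rightarrow> bool) \<Rightarrow> 'a set \<Rightarrow> bool" where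
  "maximum_independent_set V adj S \<longleftrightarrow>
     independent_set V adj S \<and> card S = independence_number V adj"

end

theory Submission imports Defs begin
definition G :: "nat \<Rightarrow> (nat*nat) list" where
"G i = [(0, i), (i, i mod 5 + 1), (5 + i, 5 + (i mod 5 + 1)), (11, 5 + i),
      (i, 5 + i), (i, 5 + (i mod 5 + 1))]"
definition L :: "(nat*nat) list" where
"L = concat (map G [1..<6])"
definition adjc :: "nat \<Rightarrow> nat \<Rightarrow> bool" where
"adjc u v \<longleftrightarrow> (u,v) \<in> set L \<or> (v,u) \<in> set L"

definition NB :: "nat list list" where
"NB = [[1,2,3,4,5],[0,2,5,6,7],[0,1,3,7,8],[0,2,4,8,9],[0,3,5,9,10],[0,1,4,10,6],
       [1,5,7,10,11],[1,2,6,8,11],[2,3,7,9,11],[3,4,8,10,11],[4,5,9,6,11],[6,7,8,9,10]]"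
definition adjf :: "nat \<Rightarrow> nat \<Rightarrow> bool" where
"adjf u v \<longleftrightarrow> v \<in> set (NB ! u)"

lemma eqv: "list_all (\<lambda>u. list_all (\<lambda>v. adjc u v = adjf u v) [0..<12]) [0..<12]"
  by code_simp

lemma chk: "list_all (\<lambda>x. list_all (\<lambda>y. list_all (\<lambda>z.
   filter (\<lambda>w. z < w \<and> \<not> adjf x w \<and> \<not> adjf y w \<and> \<not> adjf z w) [0..<12] = [])
   (filter (\<lambda>z. y < z \<and> \<not> adjf x z \<and> \<not> adjf y z) [0..<12]))
   (filter (\<lambda>y. x < y \<and> \<not> adjf x y) [0..<12])) [0..<12]"
  by code_simp

lemma wit: "list_all (\<lambda>(u,v). list_ex (\<lambda>c. list_ex (\<lambda>d.
   c \<noteq> u \<and> c \<noteq> v \<and> d \<noteq> u \<and> d \<noteq> v \<and> c \<noteq> d \<and> \<not> adjf u c \<and> \<not> adjf v c \<and>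
   \<not> adjf u d \<and> \<not> adjf v d \<and> \<not> adjf c d) [0..<12]) [0..<12]) L"
  by code_simp

lemma Lp: "list_all (\<lambda>(u,v). u < 12 \<and> v < 12 \<and> u \<noteq> v) L" by code_simp

lemma Lp': "(u,v) \<in> set L \<Longrightarrow> u < 12 \<and> v < 12 \<and> u \<noteq> v"
  using Lp unfolding list_all_iff by fastforce

lemma adjc_lt: "adjc u v \<Longrightarrow> u < 12 \<and> v < 12"
  unfolding adjc_def using Lp' by blast

lemma adjc_sym: "adjc u v = adjc v u"
  unfolding adjc_def by auto

lemma adjc_irr: "\<not> adjc u u"
  unfolding adjc_def using Lp' by blast

lemma adj_eq: "u < 12 \<Longrightarrow> v < 12 \<Longrightarrow> adjc u v = adjf u v"
proof -
  have "\<forall>u\<in>set [0..<12]. \<forall>v\<in>set [0..<12]. adjc u v = adjf u v"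
    using eqv by (simp only: list_all_iff)
  then have "\<forall>u\<in>{0..<12}. \<forall>v\<in>{0..<12}. adjc u v = adjf u v"
    by (simp only: set_upt)
  moreover assume "u < 12" "v < 12"
  ultimately show "adjc u v = adjf u v" by (meson atLeastLessThan_iff zero_le)
qed

lemma edges_eq: "ico_edges = (\<lambda>(x,y). {x,y}) ` set L"
proof -
  have e: "{1..<6::nat} = {1..5}" by auto
  show ?thesis unfolding ico_edges_def L_def G_def
    by (simp only: set_concat set_map set_upt image_UN e list.set image_insert image_empty prod.case image_image)
qed

lemma E: "{u,v} \<in> ico_edges \<longleftrightarrow> adjc u v"
  unfolding edges_eq adjc_def image_iff by (auto simp: doubleton_eq_iff)

lemma wit': "(u,v) \<in> set L \<Longrightarrow> \<exists>c<12. \<exists>d<12. c \<noteq> u \<and> c \<noteq> v \<and> d \<noteq> u \<and> d \<noteq> v \<and> c \<noteq> d \<and> \<not> adjf u c \<and> \<not> adjf v c \<and>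
   \<not> adjf u d \<and> \<not> adjf v d \<and> \<not> adjf c d"
proof -
  assume uv: "(u,v) \<in> set L"
  have "\<forall>(u,v)\<in>set L. \<exists>c\<in>set [0..<12]. \<exists>d\<in>set [0..<12]. c \<noteq> u \<and> c \<noteq> v \<and> d \<noteq> u \<and> d \<noteq> v \<and> c \<noteq> d \<and> \<not> adjf u c \<and> \<not> adjf v c \<and>
   \<not> adjf u d \<and> \<not> adjf v d \<and> \<not> adjf c d"
    using wit by (simp only: list_all_iff list_ex_iff)
  then have "\<forall>(u,v)\<in>set L. \<exists>c\<in>{0..<12}. \<exists>d\<in>{0..<12}. c \<noteq> u \<and> c \<noteq> v \<and> d \<noteq> u \<and> d \<noteq> v \<and> c \<noteq> d \<and> \<not> adjf u c \<and> \<not> adjf v c \<and>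
   \<not> adjf u d \<and> \<not> adjf v d \<and> \<not> adjf c d"
    by (simp only: set_upt)
  then obtain c d where "c \<in> {0..<12}" "d \<in> {0..<12}" "c \<noteq> u \<and> c \<noteq> v \<and> d \<noteq> u \<and> d \<noteq> v \<and> c \<noteq> d \<and> \<not> adjf u c \<and> \<not> adjf v c \<and>
   \<not> adjf u d \<and> \<not> adjf v d \<and> \<not> adjf c d" using uv by blast
  then show ?thesis by auto
qed

lemma quad:
  assumes "x < y" "y < z" "z < w" "w < 12"
    and "\<not> adjf x y" "\<not> adjf x z" "\<not> adjf x w" "\<not> adjf y z" "\<not> adjf y w" "\<not> adjf z w"
  shows False
proof -
  have C: "\<forall>x\<in>set [0..<12]. \<forall>y\<in>set (filter (\<lambda>y. x < y \<and> \<not> adjf x y) [0..<12]).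
     \<forall>z\<in>set (filter (\<lambda>z. y < z \<and> \<not> adjf x z \<and> \<not> adjf y z) [0..<12]).
     \<forall>w\<in>set [0..<12]. \<not> (z < w \<and> \<not> adjf x w \<and> \<not> adjf y w \<and> \<not> adjf z w)"
    using chk by (simp only: list_all_iff filter_empty_conv)
  have "x \<in> set [0..<12]" "y \<in> set (filter (\<lambda>y. x < y \<and> \<not> adjf x y) [0..<12])"
    "z \<in> set (filter (\<lambda>z. y < z \<and> \<not> adjf x z \<and> \<not> adjf y z) [0..<12])"
    "w \<in> set [0..<12]"
    using assms apply (simp_all only: set_upt set_filter mem_Collect_eq atLeastLessThan_iff)
    apply auto done
  then show False using C assms by blast
qed

lemma ico3:
  assumes S: "S \<subseteq> {..<12}" and ind: "\<forall>u\<in>S. \<forall>v\<in>S. \<not> adjc u v"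
  shows "card S \<le> 3"
proof (rule ccontr)
  assume "\<not> card S \<le> 3"
  hence c4: "card S \<ge> 4" by simp
  have fin: "finite S" using S finite_subset by blast
  define l where "l = sorted_list_of_set S"
  have len: "length l \<ge> 4" using c4 fin by (simp add: l_def)
  have sl: "set l = S" using fin by (simp add: l_def)
  have srt: "sorted_wrt (<) l" by (simp add: l_def)
  have lt: "\<And>i j. i < j \<Longrightarrow> j < length l \<Longrightarrow> l!i < l!j"
    using srt sorted_wrt_nth_less by blast
  have mem: "\<And>i. i < length l \<Longrightarrow> l!i \<in> S" using sl nth_mem by blast
  have b12: "\<And>i. i < length l \<Longrightarrow> l!i < 12" using mem S by auto
  have na: "\<not> adjf (l!i) (l!j)" if "i < length l" "j < length l" for i j
  proof -
    have "l!i \<in> S" "l!j \<in> S" using mem that by blast+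
    then have "\<not> adjc (l!i) (l!j)" using ind by blast
    moreover have "l!i < 12" "l!j < 12" using b12 that by blast+
    ultimately show ?thesis using adj_eq by blast
  qed
  have L4: "0 < length l" "1 < length l" "2 < length l" "3 < length l" using len by auto
  have o: "l!0 < l!1" "l!1 < l!2" "l!2 < l!3" "l!3 < 12"
    using lt[of 0 1] lt[of 1 2] lt[of 2 3] L4 b12[of 3] by auto
  show False
    using quad[OF o na[of 0 1] na[of 0 2] na[of 0 3] na[of 1 2] na[of 1 3] na[of 2 3]] L4 by blast
qed

theorem lemma3:
  assumes "{a, b} \<in> ico_edges"
  shows "independence_number ico_vertices (ico_minus_adj a b) = 4 \<and>
         (\<forall>S. maximum_independent_set ico_vertices (ico_minus_adj a b) S \<longrightarrow> a \<in> S \<and> b \<in> S)"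
proof -
  have ab: "adjc a b" using assms E by blast
  have ab12: "a < 12" "b < 12" using adjc_lt[OF ab] by auto
  have madj: "\<And>u v. ico_minus_adj a b u v \<longleftrightarrow> adjc u v \<and> {u,v} \<noteq> {a,b}"
    unfolding ico_minus_adj_def using E by blast
  have V: "ico_vertices = {..<12}" unfolding ico_vertices_def by auto
  have key: "card S \<le> 4 \<and> (card S = 4 \<longrightarrow> a \<in> S \<and> b \<in> S)"
    if ind: "independent_set ico_vertices (ico_minus_adj a b) S" for S
  proof -
    have S: "S \<subseteq> {..<12}" and I: "\<forall>u\<in>S. \<forall>v\<in>S. \<not> (adjc u v \<and> {u,v} \<noteq> {a,b})"
      using ind V madj unfolding independent_set_def by auto
    have fin: "finite S" using S finite_subset by blast
    show ?thesis
    proof (cases "a \<in> S \<and> b \<in> S")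
      case True
      have "S - {a} \<subseteq> {..<12}" using S by auto
      moreover have "\<forall>u\<in>S - {a}. \<forall>v\<in>S - {a}. \<not> adjc u v"
      proof (intro ballI notI)
        fix u v assume u: "u \<in> S - {a}" and v: "v \<in> S - {a}" and "adjc u v"
        then have "{u,v} = {a,b}" using I by blast
        then show False using u v by (auto simp: doubleton_eq_iff)
      qed
      ultimately have "card (S - {a}) \<le> 3" by (rule ico3)
      then have "card S \<le> 4" using True fin by (simp add: card_Diff_singleton)
      then show ?thesis using True by simp
    next
      case False
      have "\<forall>u\<in>S. \<forall>v\<in>S. \<not> adjc u v"
      proof (intro ballI notI)
        fix u v assume u: "u \<in> S" and v: "v \<in> S" and "adjc u v"
        then have "{u,v} = {a,b}" using I by blast
        then show False using u v False by (auto simp: doubleton_eq_iff)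
      qed
      then have "card S \<le> 3" using S ico3 by blast
      then show ?thesis by simp
    qed
  qed
  have "(a,b) \<in> set L \<or> (b,a) \<in> set L" using ab adjc_def by blast
  then obtain c d where cd: "c < 12" "d < 12" "c \<noteq> a" "c \<noteq> b" "d \<noteq> a" "d \<noteq> b" "c \<noteq> d"
    "\<not> adjf a c" "\<not> adjf b c" "\<not> adjf a d" "\<not> adjf b d" "\<not> adjf c d"
    using wit'[of a b] wit'[of b a] by blast
  have nadj: "\<not> adjc a c" "\<not> adjc b c" "\<not> adjc a d" "\<not> adjc b d" "\<not> adjc c d"
    using cd ab12 adj_eq by auto
  have aneb: "a \<noteq> b" using ab adjc_irr by auto
  define W where "W = {a,b,c,d}"
  have Wind: "independent_set ico_vertices (ico_minus_adj a b) W"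
    unfolding independent_set_def W_def V madj
    using cd ab12 nadj adjc_irr adjc_sym by (auto simp: doubleton_eq_iff)
  have Wc: "card W = 4" unfolding W_def using cd aneb by auto
  let ?C = "card ` {S. independent_set ico_vertices (ico_minus_adj a b) S}"
  have "?C \<subseteq> card ` Pow ico_vertices"
    unfolding independent_set_def by auto
  then have finC: "finite ?C" unfolding ico_vertices_def by (meson finite_Pow_iff finite_atLeastAtMost finite_imageI finite_subset)
  have num: "independence_number ico_vertices (ico_minus_adj a b) = 4"
    unfolding independence_number_def
  proof (rule Max_eqI[OF finC])
    show "\<And>y. y \<in> ?C \<Longrightarrow> y \<le> 4" using key by auto
    show "4 \<in> ?C" using Wind Wc by (metis (mono_tags, lifting) image_eqI mem_Collect_eq)
  qed
  show ?thesis
    using num key unfolding maximum_independent_set_def by auto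
qed
end
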